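(* Let $A$ be a finite field and let $S,\bar S\subseteq A$ be subsets with $\#S=\#\bar S$. Let $\psi:A\to S$ and $\bar\psi:A\to\bar S$ be surjective maps such that $\bar\psi$ is additive, i.e. $\bar\psi(x+y)=\bar\psi(x)+\bar\psi(y)$ for all $x,y\in A$. Let $u:A\to A$, $v:A\to A$ and $h:S\to\bar S$ be maps such that $\bar\psi(u(x)+v(x))=h(\psi(x))$ for all $x\in A$. Assume moreover that $\bar\psi(v(x))=0$ for every $x\in A$, and that $v$ is constant on $\psi^{-1}(s)$ for every $s\in S$. Then the map $f(x)=u(x)+v(x)$ is a permutation of $A$ if and only if $u$ is a permutation of $A$. *)

theory Defs
  imports Main
begin

end

theory Submission
  imports Defs
begin

lemma h_inj_aux:
  fixes S Sbar :: "'a::{field,finite} set"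
    and psi psibar h g :: "'a \<Rightarrow> 'a"
  assumes card_eq: "card S = card Sbar"
    and psi_onto: "psi ` UNIV = S"
    and psibar_onto: "psibar ` UNIV = Sbar"
    and sg: "surj g"
    and eq: "\<And>x. psibar (g x) = h (psi x)"
  shows "inj_on h S"
proof -
  have "Sbar = psibar ` (g ` UNIV)" using sg psibar_onto by simp
  also have "\<dots> = (\<lambda>x. h (psi x)) ` UNIV" using eq by (auto simp: image_iff)
  also have "\<dots> = h ` S" using psi_onto by auto
  finally have "card (h ` S) = card S" using card_eq by simp
  then show ?thesis by (simp add: eq_card_imp_inj_on)
qed

theorem mainTheorem1:
  fixes S Sbar :: "'a::{field,finite} set"
    and psi psibar u v h :: "'a \<Rightarrow> 'a"
  assumes card_eq: "card S = card Sbar"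
    and psi_onto: "psi ` UNIV = S"
    and psibar_onto: "psibar ` UNIV = Sbar"
    and psibar_add: "\<And>x y. psibar (x + y) = psibar x + psibar y"
    and h_maps: "\<And>s. s \<in> S \<Longrightarrow> h s \<in> Sbar"
    and key: "\<And>x. psibar (u x + v x) = h (psi x)"
    and psibar_v: "\<And>x. psibar (v x) = 0"
    and v_const: "\<And>s x y. s \<in> S \<Longrightarrow> psi x = s \<Longrightarrow> psi y = s \<Longrightarrow> v x = v y"
  shows "bij (\<lambda>x. u x + v x) \<longleftrightarrow> bij u"
proof -
  have ku: "\<And>x. psibar (u x) = h (psi x)"
    by (metis key psibar_add psibar_v add.right_neutral)
  have vc: "\<And>x y. psi x = psi y \<Longrightarrow> v x = v y"
    using v_const psi_onto by blast
  have bi: "bij g \<longleftrightarrow> inj g" for g :: "'a\<Rightarrow>'a"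
    using finite_UNIV_inj_surj[of g] bij_def by auto
  show ?thesis
  proof
    assume b: "bij (\<lambda>x. u x + v x)"
    have hi: "inj_on h S"
      using b by (intro h_inj_aux[where g="\<lambda>x. u x + v x", OF card_eq psi_onto psibar_onto _ key]) (simp add: bij_is_surj)
    have "inj u"
    proof (rule injI)
      fix x y assume "u x = u y"
      then have "h (psi x) = h (psi y)" using ku by metis
      then have "psi x = psi y" using hi psi_onto by (metis inj_onD rangeI)
      then have "v x = v y" by (rule vc)
      then have "u x + v x = u y + v y" using \<open>u x = u y\<close> by simp
      then show "x = y" using bij_is_inj[OF b] by (metis injD)
    qed
    then show "bij u" using bi by blast
  next
    assume b: "bij u"
    have hi: "inj_on h S"
      using b by (intro h_inj_aux[where g=u, OF card_eq psi_onto psibar_onto _ ku]) (simp add: bij_is_surj)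
    have "inj (\<lambda>x. u x + v x)"
    proof (rule injI)
      fix x y assume e: "u x + v x = u y + v y"
      then have "h (psi x) = h (psi y)" using key by metis
      then have "psi x = psi y" using hi psi_onto by (metis inj_onD rangeI)
      then have "v x = v y" by (rule vc)
      then have "u x = u y" using e by simp
      then show "x = y" using bij_is_inj[OF b] by (metis injD)
    qed
    then show "bij (\<lambda>x. u x + v x)" using bi by blast
  qed
qed

end
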